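(* Let $t$ be a positive integer. The following are equivalent: (i) for every set $\{G_1,\dots,G_t\}$ of $t$ graphs from $GRA_\omega$ there exists a graph $G \in GRA_\omega$ such that for every $i=1,\dots,t$ the graphs $G$ and $G_i$ are independent (i.e. $G \not\to G_i$ and $G_i \not\to G$); (ii) $t = 1$.
   Context: All graphs are simple, undirected and loopless. A homomorphism $G \to G'$ is a vertex map preserving edges; $G \to G'$ means one exists. $K_\omega$ denotes the countably infinite complete graph. $GRA_\omega$ denotes the class of all countable non-bipartite graphs that do not contain $K_\omega$ as a subgraph. Two graphs are independent if there is no homomorphism between them in either direction. *)

theory Defs
  imports Main
begin

text \<open>A countable simple graph: vertex set a subset of nat, with an adjacency relation.
  Every countable graph is isomorphic to one of this form.\<close>
type_synonym graph = "nat set \<times> (nat \<Rightarrow> nat \<Rightarrow> bool)"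

definition verts :: "graph \<Rightarrow> nat set" where "verts G = fst G"
definition adj :: "graph \<Rightarrow> nat \<Rightarrow> nat \<Rightarrow> bool" where "adj G = snd G"

definition wf_graph :: "graph \<Rightarrow> bool" where
  "wf_graph G \<longleftrightarrow> (\<forall>u v. adj G u v \<longrightarrow> u \<in> verts G \<and> v \<in> verts G)
     \<and> (\<forall>u v. adj G u v \<longrightarrow> adj G v u) \<and> (\<forall>u. \<not> adj G u u)"

definition is_hom :: "graph \<Rightarrow> graph \<Rightarrow> (nat \<Rightarrow> nat) \<Rightarrow> bool" where
  "is_hom G H f \<longleftrightarrow> (\<forall>v\<in>verts G. f v \<in> verts H)
     \<and> (\<forall>u v. adj G u v \<longrightarrow> adj H (f u) (f v))"

definition hom_to :: "graph \<Rightarrow> graph \<Rightarrow> bool" where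
  "hom_to G H \<longleftrightarrow> (\<exists>f. is_hom G H f)"

definition bipartite :: "graph \<Rightarrow> bool" where
  "bipartite G \<longleftrightarrow> (\<exists>c :: nat \<Rightarrow> bool. \<forall>u v. adj G u v \<longrightarrow> c u \<noteq> c v)"

definition contains_K_omega :: "graph \<Rightarrow> bool" where
  "contains_K_omega G \<longleftrightarrow> (\<exists>S. S \<subseteq> verts G \<and> infinite S
       \<and> (\<forall>u\<in>S. \<forall>v\<in>S. u \<noteq> v \<longrightarrow> adj G u v))"

definition GRA_omega :: "graph \<Rightarrow> bool" where
  "GRA_omega G \<longleftrightarrow> wf_graph G \<and> \<not> bipartite G \<and> \<not> contains_K_omega G"

definition independent :: "graph \<Rightarrow> graph \<Rightarrow> bool" where
  "independent G H \<longleftrightarrow> \<not> hom_to G H \<and> \<not> hom_to H G"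

end

theory Submission imports Defs "HOL-Library.Nat_Bijection" "HOL-Library.Ramsey"
begin

definition clq :: "graph \<Rightarrow> nat list \<Rightarrow> bool" where
 "clq W s \<longleftrightarrow> set s \<subseteq> verts W \<and> (\<forall>i<length s. \<forall>j<length s. i \<noteq> j \<longrightarrow> adj W (s!i) (s!j))"
definition pre :: "nat list \<Rightarrow> nat list \<Rightarrow> bool" where
 "pre a b \<longleftrightarrow> length a < length b \<and> take (length a) b = a"
definition cmp :: "nat list \<Rightarrow> nat list \<Rightarrow> bool" where
 "cmp a b \<longleftrightarrow> take (length a) b = a \<or> take (length b) a = b"

lemma cmp_le: "cmp a b \<Longrightarrow> length a \<le> length b \<Longrightarrow> take (length a) b = a"
  unfolding cmp_def by (metis append_take_drop_id take_all take_append)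

lemma chain_Komega:
  assumes wf: "wf_graph W" and unb: "\<forall>n. \<exists>s\<in>S. n < length s"
    and cl: "\<forall>s\<in>S. clq W s" and cm: "\<forall>s\<in>S. \<forall>t\<in>S. cmp s t"
  shows "contains_K_omega W"
proof -
  obtain g where g: "\<And>n. g n \<in> S \<and> n < length (g n)" using unb by metis
  define c where "c n = g n ! n" for n
  have key: "adj W (c i) (c j)" if "i \<noteq> j" "length (g i) \<le> length (g j)" for i j
  proof -
    have "take (length (g i)) (g j) = g i" using cmp_le cm g that(2) by blast
    hence "c i = g j ! i" unfolding c_def using g[of i] by (metis nth_take)
    moreover have "c j = g j ! j" by (simp add: c_def)
    moreover have "i < length (g j)" using g[of i] that(2) by linarith
    ultimately show ?thesis using cl g[of j] that(1) unfolding clq_def by auto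
  qed
  have sym: "\<And>u v. adj W u v \<Longrightarrow> adj W v u" and irr: "\<And>u. \<not> adj W u u"
    using wf unfolding wf_graph_def by auto
  have adjc: "adj W (c i) (c j)" if "i \<noteq> j" for i j
    using key[of i j] key[of j i] sym that by (metis nat_le_linear)
  have "inj c" using adjc irr by (metis injI)
  hence inf: "infinite (range c)" by (simp add: range_inj_infinite)
  have "range c \<subseteq> verts W"
  proof (rule image_subsetI)
    fix n
    have "g n ! n \<in> set (g n)" using g[of n] by simp
    then show "c n \<in> verts W" using cl g[of n] unfolding clq_def c_def by blast
  qed
  moreover have "\<forall>u\<in>range c. \<forall>v\<in>range c. u \<noteq> v \<longrightarrow> adj W u v" using adjc by (metis rangeE)
  ultimately show ?thesis using inf unfolding contains_K_omega_def by blast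
qed

definition TG :: "graph \<Rightarrow> graph" where
 "TG W = ({n. clq W (list_decode n)}, \<lambda>m n. clq W (list_decode m) \<and> clq W (list_decode n)
     \<and> (pre (list_decode m) (list_decode n) \<or> pre (list_decode n) (list_decode m)))"

lemma verts_TG: "verts (TG W) = {n. clq W (list_decode n)}" by (simp add: TG_def verts_def)
lemma adj_TG: "adj (TG W) m n \<longleftrightarrow> clq W (list_decode m) \<and> clq W (list_decode n)
     \<and> (pre (list_decode m) (list_decode n) \<or> pre (list_decode n) (list_decode m))"
  by (simp add: TG_def adj_def)

lemma wf_TG: "wf_graph (TG W)"
  unfolding wf_graph_def verts_TG adj_TG pre_def by auto

lemma pre_cmp: "pre a b \<Longrightarrow> cmp a b" unfolding pre_def cmp_def by auto

lemma cmp_same_len: "cmp a b \<Longrightarrow> length a = length b \<Longrightarrow> a = b"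
  unfolding cmp_def by auto

lemma TG_noK:
  assumes wf: "wf_graph W" and nk: "\<not> contains_K_omega W"
  shows "\<not> contains_K_omega (TG W)"
proof
  assume "contains_K_omega (TG W)"
  then obtain S where S: "S \<subseteq> verts (TG W)" "infinite S"
    "\<forall>u\<in>S. \<forall>v\<in>S. u \<noteq> v \<longrightarrow> adj (TG W) u v" unfolding contains_K_omega_def by blast
  define L where "L = list_decode ` S"
  have infL: "infinite L" unfolding L_def using S(2)
    by (metis finite_imageD inj_list_decode inj_on_subset subset_UNIV)
  have clL: "\<forall>s\<in>L. clq W s" using S(1) unfolding L_def verts_TG by auto
  have cmL: "\<forall>s\<in>L. \<forall>t\<in>L. cmp s t"
  proof (intro ballI)
    fix s t assume "s \<in> L" "t \<in> L"
    then obtain u v where uv: "u \<in> S" "v \<in> S" "s = list_decode u" "t = list_decode v"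
      unfolding L_def by blast
    show "cmp s t"
    proof (cases "u = v")
      case True then show ?thesis using uv by (simp add: cmp_def)
    next
      case False
      then have "adj (TG W) u v" using S(3) uv by blast
      then show ?thesis using uv unfolding adj_TG cmp_def pre_def by auto
    qed
  qed
  have "inj_on length L" using cmL cmp_same_len by (meson inj_onI)
  hence "infinite (length ` L)" using infL finite_imageD by blast
  hence "\<forall>n. \<exists>s\<in>L. n < length s" using infinite_nat_iff_unbounded by auto
  then show False using chain_Komega[OF wf _ clL cmL] nk by blast
qed

lemma clq_snoc: "clq W s \<Longrightarrow> x \<in> verts W \<Longrightarrow> (\<forall>i<length s. adj W (s!i) x \<and> adj W x (s!i)) \<Longrightarrow> clq W (s @ [x])"
  unfolding clq_def by (auto simp: nth_append less_Suc_eq)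

lemma clq_take: "clq W s \<Longrightarrow> clq W (take k s)"
  unfolding clq_def by (auto dest: in_set_takeD)

lemma TG_not_to:
  assumes wf: "wf_graph W" and nk: "\<not> contains_K_omega W"
  shows "\<not> hom_to (TG W) W"
proof
  assume "hom_to (TG W) W"
  then obtain f where f: "is_hom (TG W) W f" unfolding hom_to_def by blast
  have sym: "\<And>u v. adj W u v \<Longrightarrow> adj W v u" using wf unfolding wf_graph_def by auto
  define s where "s = rec_nat [] (\<lambda>k sk. sk @ [f (list_encode sk)])"
  have s0: "s 0 = []" and sS: "\<And>k. s (Suc k) = s k @ [f (list_encode (s k))]"
    unfolding s_def by auto
  have len: "length (s k) = k" for k by (induct k) (auto simp: s0 sS)
  have pref: "j \<le> k \<Longrightarrow> take j (s k) = s j" for j k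
  proof (induct k)
    case 0 then show ?case by (simp add: s0)
  next
    case (Suc k)
    then show ?case
      by (cases "j = Suc k") (auto simp: sS len le_Suc_eq)
  qed
  have nth: "i < k \<Longrightarrow> s k ! i = f (list_encode (s i))" for i k
  proof -
    assume "i < k"
    have "s k ! i = take (Suc i) (s k) ! i" by simp
    also have "\<dots> = s (Suc i) ! i" using pref[of "Suc i" k] \<open>i < k\<close> by simp
    also have "\<dots> = f (list_encode (s i))" by (simp add: sS nth_append len)
    finally show ?thesis .
  qed
  have cl: "clq W (s k)" for k
  proof (induct k)
    case 0 then show ?case by (simp add: s0 clq_def)
  next
    case (Suc k)
    have v: "list_encode (s k) \<in> verts (TG W)" using Suc by (simp add: verts_TG)
    hence "f (list_encode (s k)) \<in> verts W" using f unfolding is_hom_def by blast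
    moreover have "adj W (s k ! i) (f (list_encode (s k)))" if "i < length (s k)" for i
    proof -
      have ik: "i < k" using that len by simp
      have "pre (s i) (s k)" unfolding pre_def using pref[of i k] ik len by simp
      moreover have "clq W (s i)" using pref[of i k] ik clq_take[OF Suc, of i] by simp
      ultimately have "adj (TG W) (list_encode (s i)) (list_encode (s k))"
        using Suc by (simp add: adj_TG)
      then show ?thesis using f nth[OF ik] unfolding is_hom_def by simp
    qed
    ultimately show ?case unfolding sS using clq_snoc[OF Suc] sym by blast
  qed
  have "\<forall>n. \<exists>t\<in>range s. n < length t" using len by (metis lessI rangeI)
  moreover have "\<forall>a\<in>range s. \<forall>b\<in>range s. cmp a b"
    using pref len unfolding cmp_def by (metis nat_le_linear rangeE)
  ultimately show False using chain_Komega[OF wf _ _] cl nk by blast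
qed

definition vt :: "nat \<Rightarrow> nat list \<Rightarrow> bool" where
 "vt r xs \<longleftrightarrow> length xs = r \<and> sorted_wrt (<) xs"

definition SG :: "nat \<Rightarrow> graph" where
 "SG r = ({n. vt r (list_decode n)}, \<lambda>m n. vt r (list_decode m) \<and> vt r (list_decode n)
     \<and> (tl (list_decode m) = butlast (list_decode n) \<or> tl (list_decode n) = butlast (list_decode m)))"

lemma verts_SG: "verts (SG r) = {n. vt r (list_decode n)}" by (simp add: SG_def verts_def)
lemma adj_SG: "adj (SG r) m n \<longleftrightarrow> vt r (list_decode m) \<and> vt r (list_decode n)
     \<and> (tl (list_decode m) = butlast (list_decode n) \<or> tl (list_decode n) = butlast (list_decode m))"
  by (simp add: SG_def adj_def)

lemma vt_tl_butlast: assumes "vt r xs" "r \<ge> 2" shows "tl xs \<noteq> butlast xs"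
proof
  assume e: "tl xs = butlast xs"
  have l: "length xs = r" "sorted_wrt (<) xs" using assms unfolding vt_def by auto
  have "tl xs ! 0 = xs ! 1" using l assms by (simp add: nth_tl)
  moreover have "butlast xs ! 0 = xs ! 0" using l assms by (simp add: nth_butlast)
  moreover have "xs ! 0 < xs ! 1" using l assms by (simp add: sorted_wrt_iff_nth_less)
  ultimately show False using e by simp
qed

lemma wf_SG: "r \<ge> 2 \<Longrightarrow> wf_graph (SG r)"
  unfolding wf_graph_def verts_SG adj_SG using vt_tl_butlast by auto

definition cwalk :: "graph \<Rightarrow> (nat \<Rightarrow> nat) \<Rightarrow> nat \<Rightarrow> bool" where
 "cwalk G w L \<longleftrightarrow> (\<forall>t<L. adj G (w t) (w (Suc t))) \<and> w 0 = w L"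

lemma SG_oddgirth:
  assumes cw: "cwalk (SG r) w L" and odd: "odd L" and Lr: "L < r"
  shows False
proof -
  define v where "v t = list_decode (w t)" for t
  have st: "vt r (v t) \<and> vt r (v (Suc t)) \<and> (tl (v t) = butlast (v (Suc t)) \<or> tl (v (Suc t)) = butlast (v t))"
    if "t < L" for t using cw that unfolding cwalk_def adj_SG v_def by blast
  have len: "length (v t) = r" if "t \<le> L" for t
  proof (cases "t < L")
    case True then show ?thesis using st[of t] unfolding vt_def by auto
  next
    case False
    then have "t = L" using that by simp
    moreover have "L > 0" using odd by (cases L) auto
    ultimately show ?thesis using st[of "L - 1"] unfolding vt_def by auto
  qed
  define d :: "nat \<Rightarrow> int" where
    "d = rec_nat 0 (\<lambda>t dt. if tl (v t) = butlast (v (Suc t)) then dt + 1 else dt - 1)"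
  have d0: "d 0 = 0" and dS: "\<And>t. d (Suc t) = (if tl (v t) = butlast (v (Suc t)) then d t + 1 else d t - 1)"
    unfolding d_def by auto
  have lip: "a \<le> b \<Longrightarrow> \<bar>d b - d a\<bar> \<le> int (b - a)" for a b
  proof (induct b)
    case 0 then show ?case by simp
  next
    case (Suc b)
    show ?case
    proof (cases "a = Suc b")
      case False
      then have "a \<le> b" using Suc by simp
      then show ?thesis using Suc(1) dS[of b] by auto
    qed simp
  qed
  have par: "even (d t + int t)" for t
    by (induct t) (auto simp: d0 dS)
  have claim: "t \<le> L \<Longrightarrow> (\<forall>t'\<le>t. 0 \<le> p - d t' \<and> p - d t' < int r) \<Longrightarrow> v t ! nat (p - d t) = v 0 ! nat p" for t p
  proof (induct t)
    case 0 then show ?case by (simp add: d0)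
  next
    case (Suc t)
    have tL: "t < L" using Suc by simp
    have IH: "v t ! nat (p - d t) = v 0 ! nat p" using Suc by simp
    have b1: "0 \<le> p - d t" "p - d t < int r" using Suc(3) by auto
    have b2: "0 \<le> p - d (Suc t)" "p - d (Suc t) < int r" using Suc(3) by auto
    have lt: "length (v t) = r" "length (v (Suc t)) = r" using len tL by auto
    show ?case
    proof (cases "tl (v t) = butlast (v (Suc t))")
      case True
      then have dd: "d (Suc t) = d t + 1" using dS by simp
      define i where "i = nat (p - d (Suc t))"
      have ii: "nat (p - d t) = Suc i" "i < r - 1" using b1 b2 dd unfolding i_def by auto
      have "v (Suc t) ! i = butlast (v (Suc t)) ! i" using ii lt by (simp add: nth_butlast)
      also have "\<dots> = tl (v t) ! i" using True by simp
      also have "\<dots> = v t ! Suc i" using ii lt by (simp add: nth_tl)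
      finally show ?thesis using IH ii unfolding i_def by simp
    next
      case False
      then have dd: "d (Suc t) = d t - 1" and e: "tl (v (Suc t)) = butlast (v t)"
        using dS st[OF tL] by auto
      define i where "i = nat (p - d t)"
      have ii: "nat (p - d (Suc t)) = Suc i" "i < r - 1" using b1 b2 dd unfolding i_def by auto
      have "v (Suc t) ! Suc i = tl (v (Suc t)) ! i" using ii lt by (simp add: nth_tl)
      also have "\<dots> = butlast (v t) ! i" using e by simp
      also have "\<dots> = v t ! i" using ii lt by (simp add: nth_butlast)
      finally show ?thesis using IH ii unfolding i_def by simp
    qed
  qed
  define M where "M = Max (d ` {..L})"
  have Mmem: "M \<in> d ` {..L}" unfolding M_def by (intro Max_in) auto
  then obtain s where s: "s \<le> L" "d s = M" by auto
  have Mge: "d t \<le> M" if "t \<le> L" for t unfolding M_def using that by (intro Max_ge) auto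
  have bnd: "\<forall>t'\<le>L. 0 \<le> M - d t' \<and> M - d t' < int r"
  proof (intro allI impI)
    fix t' assume t': "t' \<le> L"
    have "\<bar>d s - d t'\<bar> \<le> int L"
      using lip[of s t'] lip[of t' s] s t' by (cases "s \<le> t'") (auto simp: abs_minus_commute)
    then show "0 \<le> M - d t' \<and> M - d t' < int r" using Mge[OF t'] s Lr by auto
  qed
  have eq: "v L ! nat (M - d L) = v 0 ! nat M" using claim[of L M] bnd by simp
  have vL: "v L = v 0" using cw unfolding cwalk_def v_def by simp
  have dL: "d L \<noteq> 0" using par[of L] odd by auto
  have "0 \<le> M" using bnd d0 by auto
  have i1: "nat (M - d L) < r" "nat M < r" using bnd d0 by auto
  have ne: "nat (M - d L) \<noteq> nat M" using dL bnd \<open>0 \<le> M\<close> by auto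
  have "distinct (v 0)" using st[of 0] odd unfolding vt_def
    by (metis odd_pos strict_sorted_iff)
  then have "v 0 ! nat (M - d L) \<noteq> v 0 ! nat M"
    using i1 ne len[of 0] by (simp add: nth_eq_iff_index_eq)
  then show False using eq vL by simp
qed

lemma get_tup:
  fixes B :: "nat set"
  assumes "infinite B"
  shows "\<exists>L. sorted_wrt (<) L \<and> length L = n \<and> set L \<subseteq> B \<and> (\<forall>x\<in>set L. m < x)"
proof -
  have "infinite (B - {..m})" using assms finite_Diff2[of "{..m}" B] by simp
  then obtain F where F: "finite F" "card F = n" "F \<subseteq> B - {..m}"
    using infinite_arbitrarily_large by blast
  show ?thesis
    by (rule exI[of _ "sorted_list_of_set F"])
       (use F in \<open>auto simp: strict_sorted_list_of_set length_sorted_list_of_set set_sorted_list_of_set\<close>)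
qed

lemma sls_strict: "sorted_wrt (<) (X::nat list) \<Longrightarrow> sorted_list_of_set (set X) = X"
  by (simp add: sorted_list_of_set_sort_remdups strict_sorted_iff distinct_remdups_id sorted_sort_id)

lemma vt_shift:
  assumes X: "vt r X" and bs: "vt r bs" and gt: "\<forall>x\<in>set X. \<forall>y\<in>set bs. x < y" and i: "i \<le> r"
  shows "vt r (drop i X @ take i bs)"
proof -
  have "sorted_wrt (<) (drop i X)" "sorted_wrt (<) (take i bs)"
    using X bs unfolding vt_def by (auto simp: sorted_wrt_drop sorted_wrt_take)
  moreover have "\<forall>x\<in>set (drop i X). \<forall>y\<in>set (take i bs). x < y"
    using gt by (meson in_set_dropD in_set_takeD)
  ultimately show ?thesis using X bs i unfolding vt_def by (auto simp: sorted_wrt_append)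
qed

lemma shift_step:
  assumes "length X = r" "length bs = r" "i < r"
  shows "tl (drop i X @ take i bs) = butlast (drop (Suc i) X @ take (Suc i) bs)"
proof -
  have "drop i X \<noteq> []" using assms by simp
  then have "tl (drop i X @ take i bs) = drop (Suc i) X @ take i bs"
    by (simp add: drop_Suc tl_drop)
  moreover have "butlast (take (Suc i) bs) = take i bs" using assms by (simp add: butlast_take)
  moreover have "take (Suc i) bs \<noteq> []" using assms by (cases bs) auto
  ultimately show ?thesis by (simp add: butlast_append)
qed

lemma SG_not_to_TG:
  assumes wf: "wf_graph W" and nk: "\<not> contains_K_omega W"
  shows "\<not> hom_to (SG r) (TG W)"
proof
  assume "hom_to (SG r) (TG W)"
  then obtain h where h: "is_hom (SG r) (TG W) h" unfolding hom_to_def by blast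
  define H where "H X = list_decode (h (list_encode X))" for X
  have Hclq: "clq W (H X)" if "vt r X" for X
    using h that unfolding is_hom_def verts_SG verts_TG H_def by auto
  have Hadj: "pre (H X) (H Y) \<or> pre (H Y) (H X)" if "vt r X" "vt r Y" "tl X = butlast Y" for X Y
  proof -
    have "adj (SG r) (list_encode X) (list_encode Y)" using that by (simp add: adj_SG)
    then have "adj (TG W) (h (list_encode X)) (h (list_encode Y))" using h unfolding is_hom_def by blast
    then show ?thesis unfolding adj_TG H_def by blast
  qed
  define tup where "tup A X \<longleftrightarrow> vt r X \<and> set X \<subseteq> A" for A X
  define Inv where "Inv A s \<longleftrightarrow> infinite A \<and> clq W s \<and> (\<forall>X. tup A X \<longrightarrow> take (length s) (H X) = s)" for A s
  have step: "\<exists>B c. Inv B (s @ [c])" if I: "Inv A s" for A s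
  proof -
    define f where "f Z = (if H (sorted_list_of_set Z) = s then 0 else (1::nat))" for Z
    have "\<exists>Y\<subseteq>A. infinite Y \<and> (\<exists>t<2. \<forall>X. X \<subseteq> Y \<and> finite X \<and> card X = r \<longrightarrow> f X = t)"
      using Ramsey[where Z=A and s=2 and r=r and f=f] I unfolding Inv_def f_def by auto
    then obtain B t where B: "B \<subseteq> A" "infinite B" "t < 2"
       "\<forall>Z. Z \<subseteq> B \<and> finite Z \<and> card Z = r \<longrightarrow> f Z = t" by blast
    have tupA: "tup A X" if "tup B X" for X using that B(1) unfolding tup_def by auto
    have fX: "(H X = s) \<longleftrightarrow> t = 0" if "tup B X" for X
    proof -
      have v: "sorted_wrt (<) X" "length X = r" "set X \<subseteq> B" using that unfolding tup_def vt_def by auto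
      have "card (set X) = r" using v by (simp add: distinct_card strict_sorted_iff)
      then have "f (set X) = t" using B(4) v by auto
      then show ?thesis using sls_strict[OF v(1)] unfolding f_def by (auto split: if_splits)
    qed
    have t1: "t = 1"
    proof (rule ccontr)
      assume "t \<noteq> 1" then have t0: "t = 0" using B by auto
      obtain L where L: "sorted_wrt (<) L" "length L = Suc r" "set L \<subseteq> B"
        using get_tup[OF B(2), of "Suc r" 0] by blast
      have s1: "sorted_wrt (<) (tl L)" using L(1) by (cases L) auto
      have s2: "sorted_wrt (<) (butlast L)" using L(1) by (metis butlast_conv_take sorted_wrt_take)
      have v0: "tup B (butlast L)" "tup B (tl L)" using L s1 s2 unfolding tup_def vt_def
        by (auto dest: in_set_butlastD) (metis list.sel(2) list.set_sel(2) subsetD)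
      have "H (butlast L) = s" "H (tl L) = s" using fX v0 t0 by auto
      moreover have "pre (H (butlast L)) (H (tl L)) \<or> pre (H (tl L)) (H (butlast L))"
        using Hadj v0 unfolding tup_def by (simp add: butlast_tl)
      ultimately show False unfolding pre_def by auto
    qed
    have long: "length s < length (H X)" if "tup B X" for X
    proof -
      have "take (length s) (H X) = s" using I tupA[OF that] unfolding Inv_def by blast
      moreover have "H X \<noteq> s" using fX[OF that] t1 by simp
      ultimately show ?thesis by (metis not_less take_all)
    qed
    define cX where "cX X = H X ! length s" for X
    have adjc: "cX X = cX Y" if "tup B X" "tup B Y" "tl X = butlast Y" for X Y
    proof -
      have p: "pre (H X) (H Y) \<or> pre (H Y) (H X)" using Hadj that unfolding tup_def by blast
      show ?thesis using p long[OF that(1)] long[OF that(2)] unfolding cX_def pre_def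
        by (metis nth_take)
    qed
    have path: "cX X = cX bs" if X: "tup B X" and bs: "tup B bs" and gt: "\<forall>x\<in>set X. \<forall>y\<in>set bs. x < y" for X bs
    proof -
      have lens: "length X = r" "length bs = r" using X bs unfolding tup_def vt_def by auto
      have tupi: "tup B (drop i X @ take i bs)" if "i \<le> r" for i
        using vt_shift[of r X bs i] X bs gt that unfolding tup_def
        by (auto dest: in_set_dropD in_set_takeD)
      have "i \<le> r \<Longrightarrow> cX (drop i X @ take i bs) = cX X" for i
      proof (induct i)
        case 0 then show ?case by simp
      next
        case (Suc i)
        then have "cX (drop i X @ take i bs) = cX (drop (Suc i) X @ take (Suc i) bs)"
          using adjc[OF tupi[of i] tupi[of "Suc i"] shift_step[OF lens, of i]] Suc.prems by simp
        then show ?case using Suc by simp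
      qed
      from this[of r] show ?thesis using lens by simp
    qed
    have conn: "cX X = cX Y" if "tup B X" "tup B Y" for X Y
    proof -
      obtain L where L: "sorted_wrt (<) L" "length L = r" "set L \<subseteq> B"
          "\<forall>x\<in>set L. sum_list X + sum_list Y < x"
        using get_tup[OF B(2), of r "sum_list X + sum_list Y"] by blast
      have tL: "tup B L" using L unfolding tup_def vt_def by auto
      have "\<forall>x\<in>set X. \<forall>y\<in>set L. x < y"
      proof (intro ballI)
        fix x y assume "x \<in> set X" "y \<in> set L"
        then show "x < y" using L(4) member_le_sum_list[of x X] by fastforce
      qed
      moreover have "\<forall>x\<in>set Y. \<forall>y\<in>set L. x < y"
      proof (intro ballI)
        fix x y assume "x \<in> set Y" "y \<in> set L"
        then show "x < y" using L(4) member_le_sum_list[of x Y] by fastforce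
      qed
      ultimately show ?thesis using path that tL by metis
    qed
    obtain X0 where X0: "sorted_wrt (<) X0" "length X0 = r" "set X0 \<subseteq> B"
      using get_tup[OF B(2), of r 0] by blast
    have tX0: "tup B X0" using X0 unfolding tup_def vt_def by auto
    have tk: "take (length (s @ [cX X0])) (H X) = s @ [cX X0]" if "tup B X" for X
    proof -
      have "take (length s) (H X) = s" using I tupA[OF that] unfolding Inv_def by blast
      then show ?thesis using long[OF that] conn[OF that tX0]
        by (simp add: take_Suc_conv_app_nth cX_def)
    qed
    have "clq W (s @ [cX X0])" using tk[OF tX0] clq_take Hclq tX0 unfolding tup_def by metis
    then have "Inv B (s @ [cX X0])" using B(2) tk unfolding Inv_def by blast
    then show ?thesis by blast
  qed
  define st where "st = rec_nat (UNIV::nat set, []::nat list)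
      (\<lambda>k p. SOME q. Inv (fst q) (snd q) \<and> (\<exists>c. snd q = snd p @ [c]))"
  have st0: "st 0 = (UNIV, [])" unfolding st_def by simp
  have stS: "st (Suc k) = (SOME q. Inv (fst q) (snd q) \<and> (\<exists>c. snd q = snd (st k) @ [c]))" for k
    unfolding st_def by simp
  have inv: "Inv (fst (st k)) (snd (st k)) \<and> length (snd (st k)) = k
      \<and> (\<forall>j\<le>k. take j (snd (st k)) = snd (st j))" for k
  proof (induct k)
    case 0 then show ?case by (simp add: st0 Inv_def clq_def)
  next
    case (Suc k)
    then obtain B c where "Inv B (snd (st k) @ [c])" using step by blast
    then have ex: "\<exists>q. Inv (fst q) (snd q) \<and> (\<exists>c. snd q = snd (st k) @ [c])" by auto
    from someI_ex[OF ex] obtain c where q: "Inv (fst (st (Suc k))) (snd (st (Suc k)))"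
      "snd (st (Suc k)) = snd (st k) @ [c]" unfolding stS[symmetric] by blast
    show ?case using q Suc by (auto simp: le_Suc_eq)
  qed
  define ss where "ss k = snd (st k)" for k
  have "\<forall>n. \<exists>t\<in>range ss. n < length t" using inv unfolding ss_def by (metis lessI rangeI)
  moreover have "\<forall>a\<in>range ss. \<forall>b\<in>range ss. cmp a b"
    using inv unfolding cmp_def ss_def by (metis nat_le_linear rangeE)
  moreover have "\<forall>a\<in>range ss. clq W a" using inv unfolding ss_def Inv_def by auto
  ultimately show False using chain_Komega[OF wf] nk by blast
qed

definition walkp :: "graph \<Rightarrow> nat \<Rightarrow> nat \<Rightarrow> nat \<Rightarrow> bool" where
 "walkp G u v n \<longleftrightarrow> (\<exists>w. w 0 = u \<and> w n = v \<and> (\<forall>t<n. adj G (w t) (w (Suc t))))"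

lemma walkp_refl: "walkp G u u 0" unfolding walkp_def by auto

lemma walkp_edge: "adj G u v \<Longrightarrow> walkp G u v 1"
  unfolding walkp_def by (rule exI[of _ "\<lambda>t. if t = 0 then u else v"]) auto

lemma walkp_app:
  assumes "walkp G u v a" "walkp G v x b" shows "walkp G u x (a + b)"
proof -
  obtain w1 where w1: "w1 0 = u" "w1 a = v" "\<forall>t<a. adj G (w1 t) (w1 (Suc t))"
    using assms(1) unfolding walkp_def by blast
  obtain w2 where w2: "w2 0 = v" "w2 b = x" "\<forall>t<b. adj G (w2 t) (w2 (Suc t))"
    using assms(2) unfolding walkp_def by blast
  define w where "w t = (if t \<le> a then w1 t else w2 (t - a))" for t
  have "\<forall>t<a+b. adj G (w t) (w (Suc t))"
  proof (intro allI impI)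
    fix t assume t: "t < a + b"
    show "adj G (w t) (w (Suc t))"
    proof (cases "t < a")
      case True then show ?thesis using w1 unfolding w_def by auto
    next
      case False
      then have "t - a < b" "Suc t - a = Suc (t - a)" using t by auto
      then show ?thesis using w1 w2 False unfolding w_def
        by (auto simp: le_Suc_eq)
    qed
  qed
  moreover have "w 0 = u" "w (a + b) = x" using w1 w2 unfolding w_def by auto
  ultimately show ?thesis unfolding walkp_def by blast
qed

lemma walkp_rev:
  assumes sym: "\<And>u v. adj G u v \<Longrightarrow> adj G v u" and "walkp G u v n" shows "walkp G v u n"
proof -
  obtain w where w: "w 0 = u" "w n = v" "\<forall>t<n. adj G (w t) (w (Suc t))"
    using assms(2) unfolding walkp_def by blast
  have "\<forall>t<n. adj G (w (n - t)) (w (n - Suc t))"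
  proof (intro allI impI)
    fix t assume t: "t < n"
    then have "adj G (w (n - Suc t)) (w (Suc (n - Suc t)))" using w(3) by simp
    moreover have "Suc (n - Suc t) = n - t" using t by simp
    ultimately show "adj G (w (n - t)) (w (n - Suc t))" using sym by metis
  qed
  then show ?thesis unfolding walkp_def using w by (intro exI[of _ "\<lambda>t. w (n - t)"]) auto
qed

lemma walkp_cwalk: "walkp G z z n \<Longrightarrow> \<exists>w. cwalk G w n"
  unfolding walkp_def cwalk_def by auto

lemma nonbip_oddwalk:
  assumes wf: "wf_graph G" and nb: "\<not> bipartite G"
  shows "\<exists>w L. cwalk G w L \<and> odd L"
proof (rule ccontr)
  assume no: "\<not> (\<exists>w L. cwalk G w L \<and> odd L)"
  have sym: "\<And>u v. adj G u v \<Longrightarrow> adj G v u" using wf unfolding wf_graph_def by auto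
  define R where "R u v \<longleftrightarrow> (\<exists>n. walkp G u v n)" for u v
  define rep where "rep u = (SOME z. R z u)" for u
  define c where "c u \<longleftrightarrow> (\<exists>n. even n \<and> walkp G (rep u) u n)" for u
  have Rrep: "R (rep u) u" for u
    unfolding rep_def by (rule someI[of _ u]) (auto simp: R_def intro: walkp_refl)
  have "c u \<noteq> c v" if e: "adj G u v" for u v
  proof
    assume cc: "c u = c v"
    have "(\<lambda>z. R z u) = (\<lambda>z. R z v)"
    proof
      fix z
      show "R z u = R z v"
        using walkp_app[of G z u _ v 1] walkp_app[of G z v _ u 1] walkp_edge[OF e] walkp_edge[OF sym[OF e]]
        unfolding R_def by blast
    qed
    then have rr: "rep u = rep v" unfolding rep_def by simp
    define z where "z = rep u"
    obtain a where a: "walkp G z u a" using Rrep[of u] unfolding R_def z_def by blast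
    obtain b where b: "walkp G z v b" using Rrep[of v] rr unfolding R_def z_def by auto
    have pa: "even a = even b"
    proof (cases "c u")
      case True
      then obtain a' b' where "even a'" "walkp G z u a'" "even b'" "walkp G z v b'"
        using cc rr unfolding c_def z_def by auto
      have "walkp G z z (a' + 1 + b')"
        using walkp_app[OF walkp_app[OF \<open>walkp G z u a'\<close> walkp_edge[OF e]] walkp_rev[OF sym \<open>walkp G z v b'\<close>]] .
      then obtain w where "cwalk G w (a' + 1 + b')" using walkp_cwalk by blast
      moreover have "odd (a' + 1 + b')" using \<open>even a'\<close> \<open>even b'\<close> by simp
      ultimately show ?thesis using no by blast
    next
      case False
      then have "\<not> c v" using cc by simp
      then have "odd a" "odd b" using False a b rr unfolding c_def z_def by auto
      then show ?thesis by simp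
    qed
    have "walkp G z z (a + 1 + b)"
      using walkp_app[OF walkp_app[OF a walkp_edge[OF e]] walkp_rev[OF sym b]] .
    then obtain w where "cwalk G w (a + 1 + b)" using walkp_cwalk by blast
    moreover have "odd (a + 1 + b)" using pa by simp
    ultimately show False using no by blast
  qed
  then have "bipartite G" unfolding bipartite_def by blast
  then show False using nb by simp
qed

lemma hom_cwalk: "is_hom G H f \<Longrightarrow> cwalk G w L \<Longrightarrow> cwalk H (f \<circ> w) L"
  unfolding is_hom_def cwalk_def by auto

lemma hom_comp: "is_hom G H f \<Longrightarrow> is_hom H K g \<Longrightarrow> is_hom G K (g \<circ> f)"
  unfolding is_hom_def by auto

lemma hom_to_trans: "hom_to G H \<Longrightarrow> hom_to H K \<Longrightarrow> hom_to G K"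
  unfolding hom_to_def using hom_comp by blast

definition K1 :: graph where "K1 = ({0}, \<lambda>_ _. False)"

lemma wf_K1: "wf_graph K1" unfolding wf_graph_def K1_def adj_def verts_def by auto
lemma noK_K1: "\<not> contains_K_omega K1"
  unfolding contains_K_omega_def K1_def verts_def by (auto dest: finite_subset)

lemma bip_to_TG: assumes "bipartite G" shows "hom_to G (TG K1)"
proof -
  obtain c :: "nat \<Rightarrow> bool" where c: "\<forall>u v. adj G u v \<longrightarrow> c u \<noteq> c v" using assms unfolding bipartite_def by blast
  define h where "h u = (if c u then list_encode [] else list_encode [0])" for u
  have cl: "clq K1 []" "clq K1 [0]" unfolding clq_def K1_def verts_def by auto
  have "is_hom G (TG K1) h"
    unfolding is_hom_def verts_TG adj_TG h_def using cl c by (auto simp: pre_def)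
  then show ?thesis unfolding hom_to_def by blast
qed

lemma infinite_three:
  assumes "infinite S" obtains a b c where "a \<in> S" "b \<in> S" "c \<in> S" "a \<noteq> b" "b \<noteq> c" "a \<noteq> c"
proof -
  obtain a where a: "a \<in> S" using assms infinite_imp_nonempty by blast
  have "infinite (S - {a})" using assms by simp
  then obtain b where b: "b \<in> S - {a}" using infinite_imp_nonempty by blast
  have "infinite (S - {a, b})" using assms by simp
  then obtain c where c: "c \<in> S - {a, b}" using infinite_imp_nonempty by blast
  show ?thesis using that a b c by blast
qed

lemma SG_GRA: assumes "4 \<le> r" shows "GRA_omega (SG r)"
proof -
  have wf: "wf_graph (SG r)" using wf_SG assms by simp
  have nb: "\<not> bipartite (SG r)"
    using bip_to_TG hom_to_trans SG_not_to_TG[OF wf_K1 noK_K1] by blast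
  have nk: "\<not> contains_K_omega (SG r)"
  proof
    assume "contains_K_omega (SG r)"
    then obtain S where S: "infinite S" "\<forall>u\<in>S. \<forall>v\<in>S. u \<noteq> v \<longrightarrow> adj (SG r) u v"
      unfolding contains_K_omega_def by blast
    obtain a b c where abc: "a \<in> S" "b \<in> S" "c \<in> S" "a \<noteq> b" "b \<noteq> c" "a \<noteq> c"
      using infinite_three[OF S(1)] by blast
    define w where "w t = (if t = 1 then b else if t = 2 then c else a)" for t :: nat
    have "\<forall>t<3. adj (SG r) (w t) (w (Suc t))"
    proof (intro allI impI)
      fix t :: nat assume "t < 3"
      then have "t = 0 \<or> t = 1 \<or> t = 2" by auto
      then show "adj (SG r) (w t) (w (Suc t))" using S(2) abc unfolding w_def by auto
    qed
    then have "cwalk (SG r) w 3" unfolding cwalk_def w_def by simp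
    then show False using SG_oddgirth[of r w 3] assms by simp
  qed
  show ?thesis unfolding GRA_omega_def using wf nb nk by blast
qed

lemma TG_GRA: assumes "GRA_omega G" shows "GRA_omega (TG G)"
proof -
  have wf: "wf_graph G" and nb: "\<not> bipartite G" and nk: "\<not> contains_K_omega G"
    using assms unfolding GRA_omega_def by auto
  obtain u v where e: "adj G u v"
    using nb unfolding bipartite_def by (metis (full_types))
  have uv: "u \<in> verts G" "v \<in> verts G" "adj G v u" using wf e unfolding wf_graph_def by auto
  have c0: "clq G []" and c1: "clq G [u]" and c2: "clq G [u, v]"
    using uv e unfolding clq_def by (auto simp: less_Suc_eq nth_Cons')
  have t1: "adj (TG G) (list_encode []) (list_encode [u])"
   and t2: "adj (TG G) (list_encode [u]) (list_encode [u,v])"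
   and t3: "adj (TG G) (list_encode []) (list_encode [u,v])"
    using c0 c1 c2 unfolding adj_TG by (auto simp: pre_def)
  have "\<not> bipartite (TG G)"
  proof
    assume "bipartite (TG G)"
    then obtain c :: "nat \<Rightarrow> bool" where "\<forall>x y. adj (TG G) x y \<longrightarrow> c x \<noteq> c y" unfolding bipartite_def by blast
    then show False using t1 t2 t3 by metis
  qed
  then show ?thesis unfolding GRA_omega_def using wf_TG TG_noK[OF wf nk] by blast
qed

lemma exists_indep:
  assumes "GRA_omega G1" shows "\<exists>G. GRA_omega G \<and> independent G G1"
proof -
  have wf: "wf_graph G1" and nb: "\<not> bipartite G1" and nk: "\<not> contains_K_omega G1"
    using assms unfolding GRA_omega_def by auto
  obtain w L where wL: "cwalk G1 w L" "odd L" using nonbip_oddwalk[OF wf nb] by blast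
  show ?thesis
  proof (cases "hom_to G1 (TG G1)")
    case True
    define r where "r = L + 4"
    have "\<not> hom_to (SG r) G1" using True hom_to_trans SG_not_to_TG[OF wf nk] by blast
    moreover have "\<not> hom_to G1 (SG r)"
    proof
      assume "hom_to G1 (SG r)"
      then obtain f where "is_hom G1 (SG r) f" unfolding hom_to_def by blast
      then have "cwalk (SG r) (f \<circ> w) L" using hom_cwalk wL by blast
      then show False using SG_oddgirth wL(2) unfolding r_def by fastforce
    qed
    ultimately have "GRA_omega (SG r) \<and> independent (SG r) G1"
      using SG_GRA[of r] unfolding independent_def r_def by auto
    then show ?thesis by blast
  next
    case False
    then show ?thesis using TG_GRA[OF assms] TG_not_to[OF wf nk] unfolding independent_def by blast
  qed
qed

function nbr :: "nat \<Rightarrow> nat set" where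
 "nbr n = (let A = set_decode (fst (prod_decode n)) in
     if A \<subseteq> {..<n} then (if (\<forall>y\<in>A. \<forall>x\<in>A. x \<notin> nbr y) then A else {}) else {})"
  by auto
termination
  by (relation "measure id") auto

declare nbr.simps[simp del]

lemma nbr_lt: "x \<in> nbr n \<Longrightarrow> x < n"
  by (subst (asm) nbr.simps) (auto simp: Let_def split: if_splits)

lemma nbr_indep: "y \<in> nbr n \<Longrightarrow> x \<in> nbr n \<Longrightarrow> x \<notin> nbr y"
  by (subst (asm) (1 2) nbr.simps) (auto simp: Let_def split: if_splits)

lemma nbr_ext:
  assumes fin: "finite A" and ind: "\<forall>y\<in>A. \<forall>x\<in>A. x \<notin> nbr y"
  shows "\<exists>m>b. nbr m = A"
proof -
  define m where "m = prod_encode (set_encode A, Suc (b + sum id A))"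
  have m1: "Suc (b + sum id A) \<le> m" unfolding m_def by (rule le_prod_encode_2)
  have "x \<le> sum id A" if "x \<in> A" for x using fin that member_le_sum[of x A id] by simp
  then have sub: "A \<subseteq> {..<m}" using m1 by fastforce
  have e: "set_decode (fst (prod_decode m)) = A" by (simp add: m_def fin)
  have "nbr m = A"
    by (subst nbr.simps) (simp only: Let_def e, simp add: sub ind)
  moreover have "b < m" using m1 by simp
  ultimately show ?thesis by blast
qed

definition HG :: graph where "HG = (UNIV, \<lambda>x y. x \<in> nbr y \<or> y \<in> nbr x)"

lemma verts_HG: "verts HG = UNIV" by (simp add: HG_def verts_def)
lemma adj_HG: "adj HG x y \<longleftrightarrow> x \<in> nbr y \<or> y \<in> nbr x" by (simp add: HG_def adj_def)

lemma wf_HG: "wf_graph HG"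
  unfolding wf_graph_def verts_HG adj_HG using nbr_lt by blast

lemma HG_lt: "adj HG x y \<Longrightarrow> x < y \<Longrightarrow> x \<in> nbr y"
  unfolding adj_HG using nbr_lt by fastforce

lemma HG_tri_ord: "a < b \<Longrightarrow> b < c \<Longrightarrow> adj HG a b \<Longrightarrow> adj HG b c \<Longrightarrow> adj HG a c \<Longrightarrow> False"
  using HG_lt nbr_indep by (meson order.strict_trans)

lemma HG_tri: assumes "adj HG a b" "adj HG b c" "adj HG a c" shows False
proof -
  have sym: "\<And>x y. adj HG x y \<Longrightarrow> adj HG y x" and irr: "\<And>x. \<not> adj HG x x"
    using wf_HG unfolding wf_graph_def by auto
  have "a \<noteq> b" "b \<noteq> c" "a \<noteq> c" using assms irr by auto
  then consider "a < b \<and> b < c" | "a < c \<and> c < b" | "b < a \<and> a < c" | "b < c \<and> c < a"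
    | "c < a \<and> a < b" | "c < b \<and> b < a" by linarith
  then show False using HG_tri_ord assms sym by metis
qed

lemma noK_HG: "\<not> contains_K_omega HG"
proof
  assume "contains_K_omega HG"
  then obtain S where S: "infinite S" "\<forall>u\<in>S. \<forall>v\<in>S. u \<noteq> v \<longrightarrow> adj HG u v"
    unfolding contains_K_omega_def by blast
  obtain a b c where "a \<in> S" "b \<in> S" "c \<in> S" "a \<noteq> b" "b \<noteq> c" "a \<noteq> c"
    using infinite_three[OF S(1)] by blast
  then show False using S(2) HG_tri by metis
qed

definition ext_pt :: "nat set \<Rightarrow> nat \<Rightarrow> nat" where
  "ext_pt S b = (SOME m. b < m \<and> nbr m = S)"

fun fl :: "graph \<Rightarrow> nat \<Rightarrow> nat list" where
  "fl G 0 = []"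
| "fl G (Suc n) = fl G n @ [ext_pt ((\<lambda>j. fl G n ! j) ` {j. j < n \<and> adj G j n}) (sum_list (fl G n))]"

lemma fl_len: "length (fl G n) = n" by (induct n) auto

lemma fl_nth: "i < m \<Longrightarrow> fl G m ! i = fl G (Suc i) ! i"
proof (induct m)
  case 0 then show ?case by simp
next
  case (Suc m)
  then show ?case by (cases "i = m") (auto simp: nth_append fl_len simp del: fl.simps(2), simp add: nth_append fl_len)
qed

lemma HG_universal:
  assumes wf: "wf_graph G" and tf: "\<And>a b c. adj G a b \<Longrightarrow> adj G b c \<Longrightarrow> adj G a c \<Longrightarrow> False"
  shows "hom_to G HG"
proof -
  define F where "F i = fl G (Suc i) ! i" for i
  have sym: "\<And>x y. adj G x y \<Longrightarrow> adj G y x" and irr: "\<And>x. \<not> adj G x x"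
    using wf unfolding wf_graph_def by auto
  have Fi: "F i = ext_pt (F ` {j. j < i \<and> adj G j i}) (sum_list (fl G i))" for i
  proof -
    have "(\<lambda>j. fl G i ! j) ` {j. j < i \<and> adj G j i} = F ` {j. j < i \<and> adj G j i}"
      unfolding F_def using fl_nth by (intro image_cong) auto
    then show ?thesis unfolding F_def by (simp add: nth_append fl_len)
  qed
  have Fle: "j < i \<Longrightarrow> F j \<le> sum_list (fl G i)" for i j
    unfolding F_def using fl_nth[of j i G] elem_le_sum_list[of j "fl G i"] fl_len by simp
  have Q: "nbr (F i) = F ` {j. j < i \<and> adj G j i} \<and> (\<forall>j<i. F j < F i)" for i
  proof (induct i rule: less_induct)
    case (less i)
    have mono: "F a < F b" if "a < b" "b < i" for a b using less that by blast
    have inj: "F a = F b \<Longrightarrow> a < i \<Longrightarrow> b < i \<Longrightarrow> a = b" for a b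
      using mono by (metis less_irrefl nat_neq_iff)
    define S where "S = F ` {j. j < i \<and> adj G j i}"
    have fin: "finite S" unfolding S_def by simp
    have ind: "\<forall>y\<in>S. \<forall>x\<in>S. x \<notin> nbr y"
    proof (intro ballI)
      fix y x assume "y \<in> S" "x \<in> S"
      then obtain a b where ab: "x = F a" "y = F b" "a < i" "b < i" "adj G a i" "adj G b i"
        unfolding S_def by blast
      show "x \<notin> nbr y"
      proof (cases a b rule: linorder_cases)
        case less
        show ?thesis
        proof
          assume "x \<in> nbr y"
          then have "F a \<in> F ` {j. j < b \<and> adj G j b}" using less ab less.hyps[of b] by simp
          then obtain j where j: "F a = F j" "j < b" "adj G j b" by blast
          then have "a = j" using inj ab by simp
          then show False using tf[of a b i] j ab by simp
        qed
      next
        case equal then show ?thesis using ab nbr_lt by blast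
      next
        case greater then show ?thesis using ab mono nbr_lt by fastforce
      qed
    qed
    obtain m where m: "sum_list (fl G i) < m" "nbr m = S" using nbr_ext[OF fin ind] by blast
    have "sum_list (fl G i) < F i \<and> nbr (F i) = S"
      unfolding Fi S_def[symmetric] ext_pt_def by (rule someI[of _ m]) (use m in auto)
    then show ?case using Fle unfolding S_def by fastforce
  qed
  have "is_hom G HG F"
    unfolding is_hom_def verts_HG
  proof (intro conjI allI impI ballI)
    fix u v assume e: "adj G u v"
    have "u \<noteq> v" using e irr by blast
    then consider "u < v" | "v < u" by linarith
    then show "adj HG (F u) (F v)"
    proof cases
      case 1 then show ?thesis using Q[of v] e unfolding adj_HG by blast
    next
      case 2 then show ?thesis using Q[of u] sym[OF e] unfolding adj_HG by blast
    qed
  qed auto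
  then show ?thesis unfolding hom_to_def by blast
qed

lemma SG_tf: assumes "4 \<le> r" "adj (SG r) a b" "adj (SG r) b c" "adj (SG r) a c" shows False
proof -
  have sym: "\<And>x y. adj (SG r) x y \<Longrightarrow> adj (SG r) y x" using wf_SG assms(1) unfolding wf_graph_def by auto
  define w where "w t = (if t = 1 then b else if t = 2 then c else a)" for t :: nat
  have "\<forall>t<3. adj (SG r) (w t) (w (Suc t))"
  proof (intro allI impI)
    fix t :: nat assume "t < 3"
    then have "t = 0 \<or> t = 1 \<or> t = 2" by auto
    moreover have "adj (SG r) c a" using sym assms(4) by blast
    ultimately show "adj (SG r) (w t) (w (Suc t))" using assms(2,3) unfolding w_def
      by (elim disjE) simp_all
  qed
  then have "cwalk (SG r) w 3" unfolding cwalk_def w_def by simp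
  then show False using SG_oddgirth[of r w 3] assms by simp
qed

lemma HG_GRA: "GRA_omega HG"
proof -
  have w: "wf_graph (SG 4)" by (rule wf_SG) simp
  have tf: "\<And>a b c. adj (SG 4) a b \<Longrightarrow> adj (SG 4) b c \<Longrightarrow> adj (SG 4) a c \<Longrightarrow> False"
    using SG_tf[of 4] by simp
  have "hom_to (SG 4) HG" using HG_universal[OF w tf] .
  then have "\<not> bipartite HG"
    using bip_to_TG hom_to_trans SG_not_to_TG[OF wf_K1 noK_K1] by blast
  then show ?thesis unfolding GRA_omega_def using wf_HG noK_HG by blast
qed

definition K3 :: graph where "K3 = ({0,1,2}, \<lambda>u v. u \<noteq> v \<and> u < 3 \<and> v < 3)"

lemma K3_GRA: "GRA_omega K3"
proof -
  have wf: "wf_graph K3" unfolding wf_graph_def K3_def adj_def verts_def by auto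
  have nb: "\<not> bipartite K3"
  proof
    assume "bipartite K3"
    then obtain c :: "nat \<Rightarrow> bool" where c: "\<forall>u v. adj K3 u v \<longrightarrow> c u \<noteq> c v"
      unfolding bipartite_def by blast
    have "c 0 \<noteq> c 1" "c 1 \<noteq> c 2" "c 0 \<noteq> c 2" using c unfolding K3_def adj_def by auto
    then show False by metis
  qed
  have nk: "\<not> contains_K_omega K3"
    unfolding contains_K_omega_def K3_def verts_def by (auto dest: finite_subset)
  show ?thesis unfolding GRA_omega_def using wf nb nk by blast
qed

lemma tri_K3:
  assumes wf: "wf_graph G" and e: "adj G a b" "adj G b c" "adj G a c"
  shows "hom_to K3 G"
proof -
  have sym: "\<And>x y. adj G x y \<Longrightarrow> adj G y x" using wf unfolding wf_graph_def by auto
  have vs: "a \<in> verts G" "b \<in> verts G" "c \<in> verts G" using wf e unfolding wf_graph_def by auto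
  define f where "f v = (if v = 0 then a else if v = 1 then b else c)" for v :: nat
  have "is_hom K3 G f"
    unfolding is_hom_def
  proof (intro conjI allI impI ballI)
    fix v assume "v \<in> verts K3" then show "f v \<in> verts G" using vs unfolding f_def by auto
  next
    fix u v assume "adj K3 u v"
    then have "u \<noteq> v" "u < 3" "v < 3" unfolding K3_def adj_def by auto
    then have "(u = 0 \<or> u = 1 \<or> u = 2) \<and> (v = 0 \<or> v = 1 \<or> v = 2)" by auto
    moreover have e2: "adj G b a" "adj G c b" "adj G c a" using e sym by auto
    ultimately show "adj G (f u) (f v)" using e \<open>u \<noteq> v\<close> unfolding f_def
      by (elim conjE disjE) simp_all
  qed
  then show ?thesis unfolding hom_to_def by blast
qed

theorem corollary2:
  fixes t :: nat
  assumes "t > 0"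
  shows "(\<forall>Gs :: nat \<Rightarrow> graph. (\<forall>i<t. GRA_omega (Gs i)) \<longrightarrow>
            (\<exists>G. GRA_omega G \<and> (\<forall>i<t. independent G (Gs i))))
         \<longleftrightarrow> t = 1"
proof
  assume P: "\<forall>Gs :: nat \<Rightarrow> graph. (\<forall>i<t. GRA_omega (Gs i)) \<longrightarrow>
            (\<exists>G. GRA_omega G \<and> (\<forall>i<t. independent G (Gs i)))"
  show "t = 1"
  proof (rule ccontr)
    assume "t \<noteq> 1"
    then have t2: "1 < t" using assms by simp
    define Gs where "Gs i = (if i = 0 then K3 else HG)" for i :: nat
    have "\<forall>i<t. GRA_omega (Gs i)" unfolding Gs_def using K3_GRA HG_GRA by simp
    then obtain G where G: "GRA_omega G" "\<forall>i<t. independent G (Gs i)" using P by blast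
    have i1: "independent G K3" using G(2) assms unfolding Gs_def by (metis)
    have i2: "independent G HG" using G(2) t2 unfolding Gs_def by (metis zero_neq_one)
    have wf: "wf_graph G" using G(1) unfolding GRA_omega_def by blast
    show False
    proof (cases "\<exists>a b c. adj G a b \<and> adj G b c \<and> adj G a c")
      case True
      then show False using tri_K3[OF wf] i1 unfolding independent_def by blast
    next
      case False
      then have "hom_to G HG" using HG_universal[OF wf] by blast
      then show False using i2 unfolding independent_def by blast
    qed
  qed
next
  assume t1: "t = 1"
  show "\<forall>Gs :: nat \<Rightarrow> graph. (\<forall>i<t. GRA_omega (Gs i)) \<longrightarrow>
            (\<exists>G. GRA_omega G \<and> (\<forall>i<t. independent G (Gs i)))"
  proof (intro allI impI)
    fix Gs :: "nat \<Rightarrow> graph" assume "\<forall>i<t. GRA_omega (Gs i)"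
    then have "GRA_omega (Gs 0)" using t1 by simp
    then obtain G where "GRA_omega G" "independent G (Gs 0)" using exists_indep by blast
    moreover have "\<forall>i<t. independent G (Gs i)" using t1 \<open>independent G (Gs 0)\<close> by simp
    ultimately show "\<exists>G. GRA_omega G \<and> (\<forall>i<t. independent G (Gs i))" by blast
  qed
qed

end
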